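(* Let $(\mathcal{E},\mathcal{L},\mathcal{B})$ be a weakly left resolving labelled space with associated inverse semigroup $S$, let $\alpha\in\mathcal{L}^\infty$ and let $\{\mathcal{F}_n\}_{n\ge0}$ be an admissible family for $\alpha$. For $n\ge0$ define \[\overline{\mathcal{F}}_n=\{A\in\mathcal{B}_{\alpha_{1,n}}:\ r(A,\alpha_{n+1,m})\in\mathcal{F}_m\ \text{for some } m\ge n\}.\] Then: (i) $\mathcal{F}_n\subseteq\overline{\mathcal{F}}_n$ for all $n\ge0$; (ii) $\{\overline{\mathcal{F}}_n\}_{n\ge0}$ is a complete family for $\alpha$; (iii) the filters $\bigcup_{n}\bigcup_{A\in\mathcal{F}_n}\uparrow(\alpha_{1,n},A,\alpha_{1,n})$ and $\bigcup_{n}\bigcup_{A\in\overline{\mathcal{F}}_n}\uparrow(\alpha_{1,n},A,\alpha_{1,n})$ of $E(S)$ coincide; (iv) if $\xi$ denotes this filter, then $\{A\in\mathcal{B}:(\alpha_{1,n},A,\alpha_{1,n})\in\xi\}=\overline{\mathcal{F}}_n$ for all $n\ge0$.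
   Context: A directed graph $\mathcal{E}=(\mathcal{E}^0,\mathcal{E}^1,r,s)$ has countable nonempty vertex set, edge set, range/source maps; paths satisfy $r(\lambda_i)=s(\lambda_{i+1})$. A labelled graph has a surjective labelling $\mathcal{L}:\mathcal{E}^1\to\mathcal{A}$ extended letterwise to finite and infinite paths. $\omega$ is the empty word, $\mathcal{L}^+=\bigcup_{n\ge1}\mathcal{L}(\mathcal{E}^n)$, $\mathcal{L}^*=\{\omega\}\cup\mathcal{L}^+$, $\mathcal{L}^\infty$ the labels of infinite paths; $\alpha_{i,j}=\alpha_i\cdots\alpha_j$ for $i\le j$, $=\omega$ for $j<i$. For $A\subseteq\mathcal{E}^0$, $\alpha\in\mathcal{L}^+$: $r(A,\alpha)=\{r(\lambda):\mathcal{L}(\lambda)=\alpha,\ s(\lambda)\in A\}$, $r(A,\omega)=A$, $r(\alpha)=r(\mathcal{E}^0,\alpha)$. $\mathcal{B}$ accommodating: closed under $r(\cdot,\alpha)$, finite intersections and unions, contains $r(\alpha)$ for $\alpha\in\mathcal{L}^+$; labelled space weakly left resolving if $r(A\cap B,\alpha)=r(A,\alpha)\cap r(B,\alpha)$ for $A,B\in\mathcal{B}$, $\alpha\in\mathcal{L}^+$. $\mathcal{B}_\alpha=\mathcal{B}\cap\mathcal{P}(r(\alpha))$. $S$ = triples $(\alpha,A,\beta)$, $\alpha,\beta\in\mathcal{L}^*$, $\emptyset\ne A\in\mathcal{B}_\alpha\cap\mathcal{B}_\beta$, plus $0$; product $(\alpha,A,\beta)(\gamma,B,\delta)=(\alpha\gamma',r(A,\gamma')\cap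 B,\delta)$ if $\gamma=\beta\gamma'$, $=(\alpha,A\cap r(B,\beta'),\delta\beta')$ if $\beta=\gamma\beta'$, $=0$ otherwise (empty middle entry identified with $0$). $E(S)=\{(\alpha,A,\alpha)\}\cup\{0\}$, $p\le q$ iff $pq=p$; $(\alpha,A,\alpha)\le(\beta,B,\beta)$ iff $\alpha=\beta\alpha'$ and $A\subseteq r(B,\alpha')$; $\uparrow x=\{y:x\le y\}$. Filters in $\mathcal{B}_\alpha$ (under inclusion): nonempty upward-closed subsets not containing $\emptyset$ and closed under finite intersections. A family $\{\mathcal{F}_n\}_{n\ge0}$ with $\mathcal{F}_n$ a filter in $\mathcal{B}_{\alpha_{1,n}}$ for $n>0$ and $\mathcal{F}_0$ a filter in $\mathcal{B}$ or empty is admissible for $\alpha$ if $\mathcal{F}_n\subseteq\{A\in\mathcal{B}_{\alpha_{1,n}}:r(A,\alpha_{n+1})\in\mathcal{F}_{n+1}\}$ for all $n\ge0$, and complete if equality holds for all $n\ge0$. *)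

theory Defs
  imports Main "HOL-Library.Countable_Set"
begin

record ('v, 'e, 'a) lgraph =
  verts :: "'v set"
  edges :: "'e set"
  rng   :: "'e \<Rightarrow> 'v"
  src   :: "'e \<Rightarrow> 'v"
  lab   :: "'e \<Rightarrow> 'a"

text \<open>A directed graph with countable nonempty vertex set and countable edge set.
  The alphabet is the image of the labelling (so the labelling is surjective onto it).\<close>
definition is_graph :: "('v, 'e, 'a) lgraph \<Rightarrow> bool" where
  "is_graph G \<longleftrightarrow> countable (verts G) \<and> verts G \<noteq> {} \<and> countable (edges G)
     \<and> (\<forall>e\<in>edges G. rng G e \<in> verts G \<and> src G e \<in> verts G)"

definition fpath :: "('v, 'e, 'a) lgraph \<Rightarrow> 'e list \<Rightarrow> bool" where
  "fpath G p \<longleftrightarrow> set p \<subseteq> edges G \<and>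
     (\<forall>i. Suc i < length p \<longrightarrow> rng G (p ! i) = src G (p ! Suc i))"

definition Lplus :: "('v, 'e, 'a) lgraph \<Rightarrow> 'a list set" where
  "Lplus G = {map (lab G) p | p. fpath G p \<and> p \<noteq> []}"

definition Lstar :: "('v, 'e, 'a) lgraph \<Rightarrow> 'a list set" where
  "Lstar G = insert [] (Lplus G)"

text \<open>Labels of infinite paths; an infinite word is a function nat => 'a,
  where index i (0-based) corresponds to the letter alpha_{i+1}.\<close>
definition Linf :: "('v, 'e, 'a) lgraph \<Rightarrow> (nat \<Rightarrow> 'a) set" where
  "Linf G = {\<alpha>. \<exists>p. (\<forall>i. p i \<in> edges G \<and> rng G (p i) = src G (p (Suc i)))
                     \<and> (\<forall>i. \<alpha> i = lab G (p i))}"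

definition rlab :: "('v, 'e, 'a) lgraph \<Rightarrow> 'v set \<Rightarrow> 'a list \<Rightarrow> 'v set" where
  "rlab G A w = (if w = [] then A else
     {rng G (last p) | p. fpath G p \<and> p \<noteq> [] \<and> map (lab G) p = w \<and> src G (hd p) \<in> A})"

definition rword :: "('v, 'e, 'a) lgraph \<Rightarrow> 'a list \<Rightarrow> 'v set" where
  "rword G w = rlab G (verts G) w"

definition accommodating :: "('v, 'e, 'a) lgraph \<Rightarrow> 'v set set \<Rightarrow> bool" where
  "accommodating G \<B> \<longleftrightarrow> \<B> \<subseteq> Pow (verts G)
     \<and> (\<forall>A\<in>\<B>. \<forall>w\<in>Lplus G. rlab G A w \<in> \<B>)
     \<and> (\<forall>A\<in>\<B>. \<forall>B\<in>\<B>. A \<inter> B \<in> \<B> \<and> A \<union> B \<in> \<B>)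
     \<and> (\<forall>w\<in>Lplus G. rword G w \<in> \<B>)"

definition labelled_space :: "('v, 'e, 'a) lgraph \<Rightarrow> 'v set set \<Rightarrow> bool" where
  "labelled_space G \<B> \<longleftrightarrow> is_graph G \<and> accommodating G \<B>"

definition weakly_left_resolving :: "('v, 'e, 'a) lgraph \<Rightarrow> 'v set set \<Rightarrow> bool" where
  "weakly_left_resolving G \<B> \<longleftrightarrow>
     (\<forall>A\<in>\<B>. \<forall>B\<in>\<B>. \<forall>w\<in>Lplus G. rlab G (A \<inter> B) w = rlab G A w \<inter> rlab G B w)"

definition Bsub :: "('v, 'e, 'a) lgraph \<Rightarrow> 'v set set \<Rightarrow> 'a list \<Rightarrow> 'v set set" where
  "Bsub G \<B> w = {A \<in> \<B>. A \<subseteq> rword G w}"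

definition pre :: "(nat \<Rightarrow> 'a) \<Rightarrow> nat \<Rightarrow> 'a list" where
  "pre \<alpha> n = map \<alpha> [0..<n]"

definition seg :: "(nat \<Rightarrow> 'a) \<Rightarrow> nat \<Rightarrow> nat \<Rightarrow> 'a list" where
  "seg \<alpha> n m = map \<alpha> [n..<m]"

definition is_filter_in :: "'v set set \<Rightarrow> 'v set set \<Rightarrow> bool" where
  "is_filter_in X F \<longleftrightarrow> F \<subseteq> X \<and> F \<noteq> {} \<and> {} \<notin> F
     \<and> (\<forall>A\<in>F. \<forall>B\<in>X. A \<subseteq> B \<longrightarrow> B \<in> F)
     \<and> (\<forall>A\<in>F. \<forall>B\<in>F. A \<inter> B \<in> F)"

definition family_filters :: "('v, 'e, 'a) lgraph \<Rightarrow> 'v set set \<Rightarrow> (nat \<Rightarrow> 'a) \<Rightarrow> (nat \<Rightarrow> 'v set set) \<Rightarrow> bool" where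
  "family_filters G \<B> \<alpha> F \<longleftrightarrow> (F 0 = {} \<or> is_filter_in \<B> (F 0))
     \<and> (\<forall>n>0. is_filter_in (Bsub G \<B> (pre \<alpha> n)) (F n))"

definition admissible :: "('v, 'e, 'a) lgraph \<Rightarrow> 'v set set \<Rightarrow> (nat \<Rightarrow> 'a) \<Rightarrow> (nat \<Rightarrow> 'v set set) \<Rightarrow> bool" where
  "admissible G \<B> \<alpha> F \<longleftrightarrow> family_filters G \<B> \<alpha> F
     \<and> (\<forall>n. F n \<subseteq> {A \<in> Bsub G \<B> (pre \<alpha> n). rlab G A [\<alpha> n] \<in> F (Suc n)})"

definition complete_family :: "('v, 'e, 'a) lgraph \<Rightarrow> 'v set set \<Rightarrow> (nat \<Rightarrow> 'a) \<Rightarrow> (nat \<Rightarrow> 'v set set) \<Rightarrow> bool" where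
  "complete_family G \<B> \<alpha> F \<longleftrightarrow> family_filters G \<B> \<alpha> F
     \<and> (\<forall>n. F n = {A \<in> Bsub G \<B> (pre \<alpha> n). rlab G A [\<alpha> n] \<in> F (Suc n)})"

definition Fbar :: "('v, 'e, 'a) lgraph \<Rightarrow> 'v set set \<Rightarrow> (nat \<Rightarrow> 'a) \<Rightarrow> (nat \<Rightarrow> 'v set set) \<Rightarrow> nat \<Rightarrow> 'v set set" where
  "Fbar G \<B> \<alpha> F n = {A \<in> Bsub G \<B> (pre \<alpha> n). \<exists>m\<ge>n. rlab G A (seg \<alpha> n m) \<in> F m}"

text \<open>Elements of S: None is the zero, Some (a, A, b) the triple (a, A, b).\<close>
type_synonym ('v, 'a) selt = "('a list \<times> 'v set \<times> 'a list) option"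

definition S_set :: "('v, 'e, 'a) lgraph \<Rightarrow> 'v set set \<Rightarrow> ('v, 'a) selt set" where
  "S_set G \<B> = insert None {Some (a, A, b) | a A b. a \<in> Lstar G \<and> b \<in> Lstar G \<and> A \<noteq> {}
      \<and> A \<in> Bsub G \<B> a \<and> A \<in> Bsub G \<B> b}"

fun smult :: "('v, 'e, 'a) lgraph \<Rightarrow> ('v, 'a) selt \<Rightarrow> ('v, 'a) selt \<Rightarrow> ('v, 'a) selt" where
  "smult G (Some (a, A, b)) (Some (c, B, d)) =
     (if take (length b) c = b then
        (let c' = drop (length b) c; M = rlab G A c' \<inter> B in
          if M = {} then None else Some (a @ c', M, d))
      else if take (length c) b = c then
        (let b' = drop (length c) b; M = A \<inter> rlab G B b' in
          if M = {} then None else Some (a, M, d @ b'))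
      else None)"
| "smult G _ _ = None"

definition ES :: "('v, 'e, 'a) lgraph \<Rightarrow> 'v set set \<Rightarrow> ('v, 'a) selt set" where
  "ES G \<B> = insert None {Some (a, A, a) | a A. a \<in> Lstar G \<and> A \<noteq> {} \<and> A \<in> Bsub G \<B> a}"

definition sleq :: "('v, 'e, 'a) lgraph \<Rightarrow> ('v, 'a) selt \<Rightarrow> ('v, 'a) selt \<Rightarrow> bool" where
  "sleq G p q \<longleftrightarrow> smult G p q = p"

definition upE :: "('v, 'e, 'a) lgraph \<Rightarrow> 'v set set \<Rightarrow> ('v, 'a) selt \<Rightarrow> ('v, 'a) selt set" where
  "upE G \<B> x = {y \<in> ES G \<B>. sleq G x y}"

definition xi_of :: "('v, 'e, 'a) lgraph \<Rightarrow> 'v set set \<Rightarrow> (nat \<Rightarrow> 'a) \<Rightarrow> (nat \<Rightarrow> 'v set set) \<Rightarrow> ('v, 'a) selt set" where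
  "xi_of G \<B> \<alpha> F = (\<Union>n. \<Union>A\<in>F n. upE G \<B> (Some (pre \<alpha> n, A, pre \<alpha> n)))"

end

theory Submission
  imports Defs
begin

lemma fpath_Nil[simp]: "fpath G []" by (simp add: fpath_def)

lemma fpath_Cons: "fpath G (e#p) \<longleftrightarrow> e \<in> edges G \<and> fpath G p \<and> (p\<noteq>[] \<longrightarrow> rng G e = src G (hd p))"
proof -
  have "(\<forall>i. Suc i < length (e#p) \<longrightarrow> rng G ((e#p) ! i) = src G ((e#p) ! Suc i)) \<longleftrightarrow>
     (p\<noteq>[] \<longrightarrow> rng G e = src G (hd p)) \<and> (\<forall>i. Suc i < length p \<longrightarrow> rng G (p ! i) = src G (p ! Suc i))"
    (is "?L \<longleftrightarrow> ?R")
  proof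
    assume L: ?L
    show ?R
    proof
      show "p\<noteq>[] \<longrightarrow> rng G e = src G (hd p)" using L[rule_format, of 0] by (cases p) auto
      show "\<forall>i. Suc i < length p \<longrightarrow> rng G (p ! i) = src G (p ! Suc i)"
        using L by (metis Suc_less_eq length_Cons nth_Cons_Suc)
    qed
  next
    assume R: ?R
    show ?L
    proof (intro allI impI)
      fix i assume "Suc i < length (e#p)"
      then show "rng G ((e#p) ! i) = src G ((e#p) ! Suc i)"
        using R by (cases i) (auto simp: hd_conv_nth)
    qed
  qed
  then show ?thesis unfolding fpath_def by auto
qed

lemma fpath_append: "fpath G (p@q) \<longleftrightarrow> fpath G p \<and> fpath G q \<and> (p\<noteq>[] \<and> q\<noteq>[] \<longrightarrow> rng G (last p) = src G (hd q))"
  by (induction p) (auto simp: fpath_Cons)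

lemma rlab_Nil[simp]: "rlab G A [] = A" by (simp add: rlab_def)

lemma rlab_mono: "A \<subseteq> B \<Longrightarrow> rlab G A w \<subseteq> rlab G B w"
  unfolding rlab_def by auto

lemma rlab_empty[simp]: "rlab G {} w = {}"
  unfolding rlab_def by auto

lemma rlab_comp: "rlab G (rlab G A u) v = rlab G A (u@v)"
proof (cases "u = [] \<or> v = []")
  case True then show ?thesis by auto
next
  case False
  then have u: "u\<noteq>[]" and v: "v\<noteq>[]" by auto
  show ?thesis
  proof
    show "rlab G (rlab G A u) v \<subseteq> rlab G A (u@v)"
    proof
      fix x assume "x \<in> rlab G (rlab G A u) v"
      then obtain q where q: "fpath G q" "q\<noteq>[]" "map (lab G) q = v" "src G (hd q) \<in> rlab G A u" "x = rng G (last q)"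
        using v unfolding rlab_def by auto
      then obtain p where p: "fpath G p" "p\<noteq>[]" "map (lab G) p = u" "src G (hd p) \<in> A" "src G (hd q) = rng G (last p)"
        using u unfolding rlab_def by auto
      have "fpath G (p@q)" using p q by (simp add: fpath_append)
      then show "x \<in> rlab G A (u@v)" unfolding rlab_def using p q u
        by (auto intro!: exI[of _ "p@q"])
    qed
    show "rlab G A (u@v) \<subseteq> rlab G (rlab G A u) v"
    proof
      fix x assume "x \<in> rlab G A (u@v)"
      then obtain r where r: "fpath G r" "r\<noteq>[]" "map (lab G) r = u@v" "src G (hd r) \<in> A" "x = rng G (last r)"
        using u unfolding rlab_def by auto
      define p where "p = take (length u) r"
      define q where "q = drop (length u) r"
      have rpq: "r = p@q" unfolding p_def q_def by simp
      have lr: "length r = length u + length v" using r(3) by (metis length_append length_map)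
      have pne: "p \<noteq> []" "q\<noteq>[]" using u v lr unfolding p_def q_def by auto
      have mp: "map (lab G) p = u" "map (lab G) q = v" using r(3) unfolding p_def q_def
        by (metis append_eq_conv_conj take_map, metis append_eq_conv_conj drop_map)
      have fp: "fpath G p" "fpath G q" "rng G (last p) = src G (hd q)" using r(1) pne rpq by (auto simp: fpath_append)
      have "rng G (last p) \<in> rlab G A u" unfolding rlab_def using u fp pne mp r(4) rpq by (auto intro!: exI[of _ p])
      then have h: "src G (hd q) \<in> rlab G A u" using fp by simp
      have e: "rlab G (rlab G A u) v = {rng G (last p) | p. fpath G p \<and> p\<noteq>[] \<and> map (lab G) p = v \<and> src G (hd p) \<in> rlab G A u}"
        using v by (simp add: rlab_def)
      have "x = rng G (last q)" using r(5) rpq pne by simp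
      then show "x \<in> rlab G (rlab G A u) v" unfolding e using h fp(2) pne(2) mp(2) by blast
    qed
  qed
qed

lemma pre_seg: "n \<le> m \<Longrightarrow> pre \<alpha> m = pre \<alpha> n @ seg \<alpha> n m"
proof -
  assume "n \<le> m"
  then have "[0..<m] = [0..<n] @ [n..<m]" by (metis le_add_diff_inverse upt_add_eq_append zero_le)
  then show ?thesis unfolding pre_def seg_def by simp
qed

lemma seg_Suc: "n \<le> k \<Longrightarrow> seg \<alpha> n (Suc k) = seg \<alpha> n k @ [\<alpha> k]"
  unfolding seg_def by simp

lemma seg_self[simp]: "seg \<alpha> n n = []" unfolding seg_def by simp

lemma pre_Suc: "pre \<alpha> (Suc n) = pre \<alpha> n @ [\<alpha> n]" unfolding pre_def by simp

lemma seg_Cons: "n < m \<Longrightarrow> seg \<alpha> n m = \<alpha> n # seg \<alpha> (Suc n) m"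
  unfolding seg_def by (simp add: upt_conv_Cons)

lemma pre_is_seg: "pre \<alpha> n = seg \<alpha> 0 n" unfolding pre_def seg_def by simp

lemma seg_Lstar:
  assumes "\<alpha> \<in> Linf G" shows "seg \<alpha> n m \<in> Lstar G"
proof (cases "n < m")
  case False then show ?thesis by (simp add: seg_def Lstar_def)
next
  case True
  obtain p where p: "\<forall>i. p i \<in> edges G \<and> rng G (p i) = src G (p (Suc i))" "\<forall>i. \<alpha> i = lab G (p i)"
    using assms unfolding Linf_def by auto
  have "set (map p [n..<m]) \<subseteq> edges G" using p(1) by auto
  moreover have "\<forall>i. Suc i < length (map p [n..<m]) \<longrightarrow> rng G (map p [n..<m] ! i) = src G (map p [n..<m] ! Suc i)"
    using p(1) by simp
  ultimately have "fpath G (map p [n..<m])" unfolding fpath_def by blast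
  moreover have "map (lab G) (map p [n..<m]) = seg \<alpha> n m" unfolding seg_def using p(2) by simp
  moreover have "map p [n..<m] \<noteq> []" using True by simp
  ultimately have "seg \<alpha> n m \<in> Lplus G" unfolding Lplus_def mem_Collect_eq
    by (intro exI[of _ "map p [n..<m]"]) simp
  then show ?thesis unfolding Lstar_def by simp
qed

lemma pre_Lstar: "\<alpha> \<in> Linf G \<Longrightarrow> pre \<alpha> n \<in> Lstar G"
  by (simp add: pre_is_seg seg_Lstar)


lemma rlab_closed: "accommodating G \<B> \<Longrightarrow> A \<in> \<B> \<Longrightarrow> w \<in> Lstar G \<Longrightarrow> rlab G A w \<in> \<B>"
  unfolding accommodating_def Lstar_def by auto

lemma wlr: "weakly_left_resolving G \<B> \<Longrightarrow> A \<in> \<B> \<Longrightarrow> B \<in> \<B> \<Longrightarrow> w \<in> Lstar G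
   \<Longrightarrow> rlab G (A \<inter> B) w = rlab G A w \<inter> rlab G B w"
  unfolding weakly_left_resolving_def Lstar_def by auto

lemma Bsub_Nil: "accommodating G \<B> \<Longrightarrow> Bsub G \<B> [] = \<B>"
  unfolding Bsub_def rword_def accommodating_def by auto

lemma Bsub_seg:
  assumes "accommodating G \<B>" "\<alpha> \<in> Linf G" "A \<in> Bsub G \<B> (pre \<alpha> n)" "n \<le> m"
  shows "rlab G A (seg \<alpha> n m) \<in> Bsub G \<B> (pre \<alpha> m)"
proof -
  have "rlab G A (seg \<alpha> n m) \<in> \<B>" using assms rlab_closed seg_Lstar unfolding Bsub_def by blast
  moreover have "rlab G A (seg \<alpha> n m) \<subseteq> rword G (pre \<alpha> m)"
  proof -
    have "rlab G A (seg \<alpha> n m) \<subseteq> rlab G (rword G (pre \<alpha> n)) (seg \<alpha> n m)"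
      using assms(3) unfolding Bsub_def by (auto intro: rlab_mono[THEN subsetD])
    also have "\<dots> = rword G (pre \<alpha> m)" unfolding rword_def rlab_comp pre_seg[OF assms(4), of \<alpha>] ..
    finally show ?thesis .
  qed
  ultimately show ?thesis unfolding Bsub_def by blast
qed

lemma sleq_None: "\<not> sleq G (Some x) None" unfolding sleq_def by (cases x) auto


lemma sleq_char:
  assumes "A \<noteq> {}"
  shows "sleq G (Some (a,A,a)) (Some (c,C,c)) \<longleftrightarrow> (\<exists>b'. a = c@b' \<and> A \<subseteq> rlab G C b')"
proof (cases "take (length a) c = a")
  case True
  then obtain c' where c: "c = a @ c'" by (metis append_take_drop_id)
  have s: "smult G (Some (a,A,a)) (Some (c,C,c)) = (if rlab G A c' \<inter> C = {} then None else Some (a @ c', rlab G A c' \<inter> C, c))"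
    using c by (simp add: Let_def)
  show ?thesis
  proof (cases "c' = []")
    case True
    have "(\<exists>b'. a = c@b' \<and> A \<subseteq> rlab G C b') \<longleftrightarrow> A \<subseteq> C" using c True by auto
    then show ?thesis using c assms True unfolding sleq_def s by auto
  next
    case False
    then have "\<not>(\<exists>b'. a = c@b')" using c by auto
    then show ?thesis using c False unfolding sleq_def s by auto
  qed
next
  case False
  show ?thesis
  proof (cases "take (length c) a = c")
    case True
    then obtain b' where b: "a = c @ b'" by (metis append_take_drop_id)
    have s: "smult G (Some (a,A,a)) (Some (c,C,c)) = (if A \<inter> rlab G C b' = {} then None else Some (a, A \<inter> rlab G C b', c @ b'))"
      using b False by (simp add: Let_def)
    show ?thesis unfolding sleq_def s using b assms by auto
  next
    case F2: False
    then have "\<not>(\<exists>b'. a = c@b')" by auto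
    moreover have "smult G (Some (a,A,a)) (Some (c,C,c)) = None" using False F2 by simp
    ultimately show ?thesis unfolding sleq_def by auto
  qed
qed

context
  fixes G :: "('v, 'e, 'a) lgraph" and \<B> :: "'v set set"
    and \<alpha> :: "nat \<Rightarrow> 'a" and F :: "nat \<Rightarrow> 'v set set"
  assumes ls: "labelled_space G \<B>"
    and wl: "weakly_left_resolving G \<B>"
    and aL: "\<alpha> \<in> Linf G"
    and adm: "admissible G \<B> \<alpha> F"
begin

lemma acc: "accommodating G \<B>" using ls unfolding labelled_space_def by simp

lemma FF: "F m = {} \<or> is_filter_in (Bsub G \<B> (pre \<alpha> m)) (F m)"
proof (cases "m = 0")
  case True
  have "pre \<alpha> 0 = []" unfolding pre_def by simp
  then show ?thesis using True adm Bsub_Nil[OF acc] unfolding admissible_def family_filters_def by simp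
next
  case False then show ?thesis using adm unfolding admissible_def family_filters_def by simp
qed

lemma F_Bsub: "X \<in> F m \<Longrightarrow> X \<in> Bsub G \<B> (pre \<alpha> m)"
  using FF[of m] unfolding is_filter_in_def by auto

lemma F_ne: "{} \<notin> F m"
  using FF[of m] unfolding is_filter_in_def by auto

lemma F_up: "X \<in> F m \<Longrightarrow> Y \<in> Bsub G \<B> (pre \<alpha> m) \<Longrightarrow> X \<subseteq> Y \<Longrightarrow> Y \<in> F m"
  using FF[of m] unfolding is_filter_in_def by auto

lemma F_int: "X \<in> F m \<Longrightarrow> Y \<in> F m \<Longrightarrow> X \<inter> Y \<in> F m"
  using FF[of m] unfolding is_filter_in_def by auto

lemma F_nonempty: "n > 0 \<Longrightarrow> F n \<noteq> {}"
  using adm unfolding admissible_def family_filters_def is_filter_in_def by auto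

lemma adm_step: "X \<in> F k \<Longrightarrow> rlab G X [\<alpha> k] \<in> F (Suc k)"
  using adm unfolding admissible_def by blast

lemma push:
  assumes "n \<le> m" "m \<le> k" "rlab G A (seg \<alpha> n m) \<in> F m"
  shows "rlab G A (seg \<alpha> n k) \<in> F k"
  using assms(2)
proof (induction k rule: dec_induct)
  case base then show ?case using assms(3) .
next
  case (step k)
  have "rlab G A (seg \<alpha> n (Suc k)) = rlab G (rlab G A (seg \<alpha> n k)) [\<alpha> k]"
    using seg_Suc[of n k \<alpha>] assms(1) step(1) by (simp add: rlab_comp)
  then show ?case using adm_step[OF step.IH] by simp
qed

lemma Fbar_ge:
  assumes "A \<in> Fbar G \<B> \<alpha> F n" "n \<le> k"
  shows "\<exists>m\<ge>k. rlab G A (seg \<alpha> n m) \<in> F m"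
proof -
  obtain m where m: "m \<ge> n" "rlab G A (seg \<alpha> n m) \<in> F m" using assms(1) unfolding Fbar_def by auto
  have "rlab G A (seg \<alpha> n (max m k)) \<in> F (max m k)" using push[OF m(1) _ m(2)] by simp
  then show ?thesis by (intro exI[of _ "max m k"]) simp
qed

lemma Fbar_Bsub: "A \<in> Fbar G \<B> \<alpha> F n \<Longrightarrow> A \<in> Bsub G \<B> (pre \<alpha> n)"
  unfolding Fbar_def by auto

lemma Fbar_ne: "{} \<notin> Fbar G \<B> \<alpha> F n"
  unfolding Fbar_def using F_ne by auto

lemma F_Fbar: "F n \<subseteq> Fbar G \<B> \<alpha> F n"
  unfolding Fbar_def using F_Bsub by (auto intro!: exI[of _ n])

lemma Fbar_up:
  assumes "A \<in> Fbar G \<B> \<alpha> F n" "B \<in> Bsub G \<B> (pre \<alpha> n)" "A \<subseteq> B"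
  shows "B \<in> Fbar G \<B> \<alpha> F n"
proof -
  obtain m where m: "m \<ge> n" "rlab G A (seg \<alpha> n m) \<in> F m" using assms(1) unfolding Fbar_def by auto
  have "rlab G B (seg \<alpha> n m) \<in> F m"
    by (rule F_up[OF m(2) Bsub_seg[OF acc aL assms(2) m(1)] rlab_mono[OF assms(3)]])
  then show ?thesis using assms(2) m(1) unfolding Fbar_def by auto
qed

lemma Fbar_int:
  assumes "A \<in> Fbar G \<B> \<alpha> F n" "B \<in> Fbar G \<B> \<alpha> F n"
  shows "A \<inter> B \<in> Fbar G \<B> \<alpha> F n"
proof -
  obtain m1 where m1: "m1 \<ge> n" "rlab G A (seg \<alpha> n m1) \<in> F m1" using assms(1) unfolding Fbar_def by auto
  obtain m where m: "m \<ge> m1" "rlab G B (seg \<alpha> n m) \<in> F m" using Fbar_ge[OF assms(2), of m1] m1(1) by auto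
  have a: "rlab G A (seg \<alpha> n m) \<in> F m" using push[OF m1(1) m(1) m1(2)] .
  have AB: "A \<in> \<B>" "B \<in> \<B>" using assms Fbar_Bsub unfolding Bsub_def by auto
  have "rlab G (A \<inter> B) (seg \<alpha> n m) = rlab G A (seg \<alpha> n m) \<inter> rlab G B (seg \<alpha> n m)"
    using wlr[OF wl AB seg_Lstar[OF aL]] .
  then have "rlab G (A \<inter> B) (seg \<alpha> n m) \<in> F m" using F_int[OF a m(2)] by simp
  moreover have "A \<inter> B \<in> Bsub G \<B> (pre \<alpha> n)" using assms Fbar_Bsub acc
    unfolding Bsub_def accommodating_def by auto
  moreover have "n \<le> m" using m m1 by simp
  ultimately show ?thesis unfolding Fbar_def by blast
qed

lemma Fbar_filter:
  assumes "Fbar G \<B> \<alpha> F n \<noteq> {}"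
  shows "is_filter_in (Bsub G \<B> (pre \<alpha> n)) (Fbar G \<B> \<alpha> F n)"
  unfolding is_filter_in_def using assms Fbar_Bsub Fbar_ne Fbar_up Fbar_int by blast

lemma Fbar_complete:
  "Fbar G \<B> \<alpha> F n = {A \<in> Bsub G \<B> (pre \<alpha> n). rlab G A [\<alpha> n] \<in> Fbar G \<B> \<alpha> F (Suc n)}"
proof (intro equalityI subsetI)
  fix A assume A: "A \<in> Fbar G \<B> \<alpha> F n"
  obtain m where m: "m \<ge> Suc n" "rlab G A (seg \<alpha> n m) \<in> F m" using Fbar_ge[OF A, of "Suc n"] by auto
  have e: "rlab G A (seg \<alpha> n m) = rlab G (rlab G A [\<alpha> n]) (seg \<alpha> (Suc n) m)"
    using seg_Cons[of n m \<alpha>] m(1) by (simp add: rlab_comp)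
  have B: "A \<in> Bsub G \<B> (pre \<alpha> n)" using Fbar_Bsub[OF A] .
  have "rlab G A [\<alpha> n] \<in> Bsub G \<B> (pre \<alpha> (Suc n))"
    using Bsub_seg[OF acc aL B, of "Suc n"] seg_Cons[of n "Suc n" \<alpha>] by simp
  then show "A \<in> {A \<in> Bsub G \<B> (pre \<alpha> n). rlab G A [\<alpha> n] \<in> Fbar G \<B> \<alpha> F (Suc n)}"
    using B m e unfolding Fbar_def by auto
next
  fix A assume "A \<in> {A \<in> Bsub G \<B> (pre \<alpha> n). rlab G A [\<alpha> n] \<in> Fbar G \<B> \<alpha> F (Suc n)}"
  then have B: "A \<in> Bsub G \<B> (pre \<alpha> n)" and A: "rlab G A [\<alpha> n] \<in> Fbar G \<B> \<alpha> F (Suc n)" by auto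
  obtain m where m: "m \<ge> Suc n" "rlab G (rlab G A [\<alpha> n]) (seg \<alpha> (Suc n) m) \<in> F m"
    using A unfolding Fbar_def by auto
  have e: "rlab G A (seg \<alpha> n m) = rlab G (rlab G A [\<alpha> n]) (seg \<alpha> (Suc n) m)"
    using seg_Cons[of n m \<alpha>] m(1) by (simp add: rlab_comp)
  show "A \<in> Fbar G \<B> \<alpha> F n" using B m e unfolding Fbar_def by (auto intro!: exI[of _ m])
qed

lemma ES_Some:
  assumes "y \<in> ES G \<B>" "sleq G (Some x) y"
  shows "\<exists>c C. y = Some (c,C,c) \<and> C \<noteq> {} \<and> c \<in> Lstar G \<and> C \<in> Bsub G \<B> c"
proof -
  have "y \<noteq> None" using assms(2) sleq_None[of G x] by metis
  then show ?thesis using assms(1) unfolding ES_def by auto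
qed

lemma ES_self:
  assumes "a \<in> Lstar G" "A \<noteq> {}" "A \<in> Bsub G \<B> a"
  shows "Some (a,A,a) \<in> upE G \<B> (Some (a,A,a))"
proof -
  have "sleq G (Some (a,A,a)) (Some (a,A,a))" using sleq_char[OF assms(2)] by (metis append_Nil2 rlab_Nil subset_refl)
  then show ?thesis using assms unfolding upE_def ES_def by auto
qed

lemma xi_sub: "xi_of G \<B> \<alpha> F \<subseteq> xi_of G \<B> \<alpha> (Fbar G \<B> \<alpha> F)"
  unfolding xi_of_def using F_Fbar by blast

lemma xi_sup: "xi_of G \<B> \<alpha> (Fbar G \<B> \<alpha> F) \<subseteq> xi_of G \<B> \<alpha> F"
proof
  fix y assume "y \<in> xi_of G \<B> \<alpha> (Fbar G \<B> \<alpha> F)"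
  then obtain n A where A: "A \<in> Fbar G \<B> \<alpha> F n" and y: "y \<in> upE G \<B> (Some (pre \<alpha> n, A, pre \<alpha> n))"
    unfolding xi_of_def by auto
  obtain m where m: "m \<ge> n" "rlab G A (seg \<alpha> n m) \<in> F m" using A unfolding Fbar_def by auto
  have yE: "y \<in> ES G \<B>" and sl: "sleq G (Some (pre \<alpha> n, A, pre \<alpha> n)) y" using y unfolding upE_def by auto
  obtain c C where cC: "y = Some (c,C,c)" using ES_Some[OF yE sl] by auto
  have Ane: "A \<noteq> {}" using A Fbar_ne by auto
  have "\<exists>b'. pre \<alpha> n = c @ b' \<and> A \<subseteq> rlab G C b'" using sl unfolding cC sleq_char[OF Ane] .
  then obtain b' where b': "pre \<alpha> n = c @ b'" "A \<subseteq> rlab G C b'" by blast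
  define B where "B = rlab G A (seg \<alpha> n m)"
  have Bne: "B \<noteq> {}" using m(2) F_ne unfolding B_def by auto
  have "pre \<alpha> m = c @ (b' @ seg \<alpha> n m)" using pre_seg[OF m(1), of \<alpha>] b' by simp
  moreover have "B \<subseteq> rlab G C (b' @ seg \<alpha> n m)" unfolding B_def rlab_comp[symmetric]
    using rlab_mono[OF b'(2)] .
  ultimately have "sleq G (Some (pre \<alpha> m, B, pre \<alpha> m)) y" using sleq_char[OF Bne] cC by blast
  then have "y \<in> upE G \<B> (Some (pre \<alpha> m, B, pre \<alpha> m))" using yE unfolding upE_def by auto
  then show "y \<in> xi_of G \<B> \<alpha> F" using m(2) unfolding xi_of_def B_def by blast
qed

lemma part4: "{A \<in> \<B>. Some (pre \<alpha> n, A, pre \<alpha> n) \<in> xi_of G \<B> \<alpha> F} = Fbar G \<B> \<alpha> F n"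
proof (intro equalityI subsetI)
  fix A assume "A \<in> {A \<in> \<B>. Some (pre \<alpha> n, A, pre \<alpha> n) \<in> xi_of G \<B> \<alpha> F}"
  then obtain k D where D: "D \<in> F k" and z: "Some (pre \<alpha> n, A, pre \<alpha> n) \<in> upE G \<B> (Some (pre \<alpha> k, D, pre \<alpha> k))"
    unfolding xi_of_def by auto
  have zE: "Some (pre \<alpha> n, A, pre \<alpha> n) \<in> ES G \<B>" and sl: "sleq G (Some (pre \<alpha> k, D, pre \<alpha> k)) (Some (pre \<alpha> n, A, pre \<alpha> n))"
    using z unfolding upE_def by auto
  have AB: "A \<in> Bsub G \<B> (pre \<alpha> n)" using zE unfolding ES_def by auto
  have Dne: "D \<noteq> {}" using D F_ne by auto
  have "\<exists>b'. pre \<alpha> k = pre \<alpha> n @ b' \<and> D \<subseteq> rlab G A b'" using sl unfolding sleq_char[OF Dne] .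
  then obtain b' where b': "pre \<alpha> k = pre \<alpha> n @ b'" "D \<subseteq> rlab G A b'" by blast
  have "length (pre \<alpha> k) = k" "length (pre \<alpha> n) = n" unfolding pre_def by auto
  then have nk: "n \<le> k" using b'(1) by (metis le_add1 length_append)
  have "b' = seg \<alpha> n k" using b'(1) pre_seg[OF nk, of \<alpha>] by simp
  then have "rlab G A (seg \<alpha> n k) \<in> F k" using F_up[OF D Bsub_seg[OF acc aL AB nk]] b'(2) by simp
  then show "A \<in> Fbar G \<B> \<alpha> F n" using AB nk unfolding Fbar_def by auto
next
  fix A assume A: "A \<in> Fbar G \<B> \<alpha> F n"
  have AB: "A \<in> Bsub G \<B> (pre \<alpha> n)" using Fbar_Bsub[OF A] .
  have "Some (pre \<alpha> n, A, pre \<alpha> n) \<in> upE G \<B> (Some (pre \<alpha> n, A, pre \<alpha> n))"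
    using ES_self[OF pre_Lstar[OF aL] _ AB] A Fbar_ne by auto
  then have "Some (pre \<alpha> n, A, pre \<alpha> n) \<in> xi_of G \<B> \<alpha> (Fbar G \<B> \<alpha> F)" using A unfolding xi_of_def by blast
  then have "Some (pre \<alpha> n, A, pre \<alpha> n) \<in> xi_of G \<B> \<alpha> F" using xi_sup by blast
  then show "A \<in> {A \<in> \<B>. Some (pre \<alpha> n, A, pre \<alpha> n) \<in> xi_of G \<B> \<alpha> F}"
    using AB unfolding Bsub_def by auto
qed

lemma part2: "complete_family G \<B> \<alpha> (Fbar G \<B> \<alpha> F)"
proof -
  have h: "Fbar G \<B> \<alpha> F 0 \<noteq> {} \<Longrightarrow> is_filter_in \<B> (Fbar G \<B> \<alpha> F 0)"
    using Fbar_filter[of 0] Bsub_Nil[OF acc] by (simp add: pre_def)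
  have "Fbar G \<B> \<alpha> F 0 = {} \<or> is_filter_in \<B> (Fbar G \<B> \<alpha> F 0)"
    using h by blast
  moreover have "\<forall>n>0. is_filter_in (Bsub G \<B> (pre \<alpha> n)) (Fbar G \<B> \<alpha> F n)"
    using Fbar_filter F_nonempty F_Fbar by blast
  ultimately show ?thesis unfolding complete_family_def family_filters_def using Fbar_complete by blast
qed

end

theorem mainTheorem10:
  fixes G :: "('v, 'e, 'a) lgraph" and \<B> :: "'v set set"
    and \<alpha> :: "nat \<Rightarrow> 'a" and F :: "nat \<Rightarrow> 'v set set"
  assumes "labelled_space G \<B>"
    and "weakly_left_resolving G \<B>"
    and "\<alpha> \<in> Linf G"
    and "admissible G \<B> \<alpha> F"
  shows "(\<forall>n. F n \<subseteq> Fbar G \<B> \<alpha> F n)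
    \<and> complete_family G \<B> \<alpha> (Fbar G \<B> \<alpha> F)
    \<and> xi_of G \<B> \<alpha> F = xi_of G \<B> \<alpha> (Fbar G \<B> \<alpha> F)
    \<and> (\<forall>n. {A \<in> \<B>. Some (pre \<alpha> n, A, pre \<alpha> n) \<in> xi_of G \<B> \<alpha> F} = Fbar G \<B> \<alpha> F n)"
  using F_Fbar[OF assms] part2[OF assms] xi_sub[OF assms] xi_sup[OF assms] part4[OF assms]
  by blast

end
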